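(* Let $m\in\pi^*(N)\subseteq M$ and $\theta\in M^{\mathrm{prin}}_{\mathbb R}\setminus\mathrm{Supp}(\mathfrak D)$. Then every broken line contributing to $\vartheta_{(0,m),\theta}$, after projection along $M^{\mathrm{prin}}_{\mathbb R}=M_{\mathbb R}\oplus N_{\mathbb R}\to M_{\mathbb R}$, is contained in $\bar\theta+\pi^*(N_{\mathbb R})$, where $\bar\theta$ is the projection of $\theta$.
   Context: $Q$ finite quiver without loops or oriented 2-cycles, $W$ a finite potential; $N=\mathbb Z^{Q_0}$ with basis $e_i$, $M=\mathrm{Hom}(N,\mathbb Z)$, $N^+$ the nonzero nonnegative vectors; $B(e_i,e_j)=a_{ji}-a_{ij}$ ($a_{ij}$ arrows $i\to j$); $\pi^*:N\to M$, $\pi^*(n)=B(\cdot,n)$. $H_{\mathrm{reg}}(Q,W)$ is the regular part (over $\mathbb C_{\mathrm{reg}}(t)$, $q=t^2$) of Joyce's motivic Hall algebra of representations of $(Q,W)$, graded by dimension vector; $\mathfrak g^{\mathrm{Hall}}=(t-t^{-1})^{-1}\bigoplus_{d\in N^+}H_{\mathrm{reg}}(Q,W)_d$ with commutator bracket; $1_{\mathrm{sst}}(\theta)$ is the Hall algebra element of $\theta$-semistable objects. Principal coefficients: $N^{\mathrm{prin}}=N\oplus M$, $M^{\mathrm{prin}}=M\oplus N$, $B^{\mathrm{prin}}((n_1,m_1),(n_2,m_2))=B(n_1,n_2)-\langle n_1,m_2\rangle+\langle n_2,m_1\rangle$, $p^{*,\mathrm{prin}}(n,m)=(\pi^*(n)-m,n)$.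 $A=A^{\mathrm{Hall,prin}}=H_{\mathrm{reg}}(Q,W)\otimes\mathbb C_{\mathrm{reg}}(t)[M]$ with $a_d*z^m=q^{-\langle d,m\rangle}z^m*a_d$, graded by $N^{\mathrm{prin}}$ ($a_dz^m$ in degree $(d,m)$), with $\mathfrak g^{\mathrm{Hall}}$ (in degrees $(N^+,0)$) acting by commutators. $\mathfrak D=\mathfrak D^{\mathrm{Hall,prin}}_{\mathrm{scat}}$ is a consistent scattering diagram in $M^{\mathrm{prin}}_{\mathbb R}$ over $\widehat{\mathfrak g}^{\mathrm{Hall}}$ (walls $(\mathfrak d,g_{\mathfrak d})$ with $n_{\mathfrak d}\in(N^+,0)$ primitive, $g_{\mathfrak d}\in\prod_k\mathfrak g_{kn_{\mathfrak d}}$, $\mathfrak d$ a codimension-one rational polyhedral affine cone parallel to $n_{\mathfrak d}^\perp$) containing the walls $((e_i,0)^\perp,\log 1_{\mathrm{sst}}(\pi^*(e_i)))$, all other walls being outgoing (not containing $p^{*,\mathrm{prin}}(n_{\mathfrak d})$); assume it exists. A broken line with ends $(\lambda,\theta)$: continuous $\gamma:(-\infty,0]\to M^{\mathrm{prin}}_{\mathbb R}\setminus\mathrm{Joints}(\mathfrak D)$, times $-\infty=t_{-1}<t_0\le\dots\le t_\ell=0$, homogeneous $a_i\in A_{\lambda_i}$, $\lambda_i\ne0$, with $\lambda_0=\lambda$, $\gamma(0)=\theta$, $\gamma'(t)=-p^{*,\mathrm{prin}}(\lambda_i)$ on $(t_{i-1},t_i)$, $a_0=z^\lambda$, $\gamma(t_i)\in\mathrm{Supp}(\mathfrak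 D)$ for $i<\ell$, and $a_{i+1}$ a homogeneous term of $g_i\cdot a_i$ other than $a_i$, where $g_i=\prod_{\mathfrak d\ni\gamma(t_i)}\exp(g_{\mathfrak d})^{\mathrm{sign}\langle n_{\mathfrak d},p^{*,\mathrm{prin}}(\lambda)\rangle}$ acting on the completion of $A$. The broken lines contributing to $\vartheta_{\lambda,\theta}$ are all broken lines with ends $(\lambda,\theta)$. *)

theory Defs
  imports "HOL-Analysis.Analysis"
begin

text \<open>Vertices of the quiver form a finite type 'i. The lattices
N = Z^Q0 and M = Hom(N,Z) are both realised inside real^'i (M identified via the
dual basis, the pairing is the inner product). N^prin = N + M and
M^prin_R = M_R + N_R are both represented as pairs real^'i * real^'i.
The quiver is given by a :: 'i => 'i => nat, a i j = number of arrows i -> j.\<close>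

type_synonym 'i vpair = "(real^'i) \<times> (real^'i)"

definition integral_vec :: "real^('i::finite) \<Rightarrow> bool" where
  "integral_vec v \<longleftrightarrow> (\<forall>i. v $ i \<in> \<int>)"

definition integral_pair :: "('i::finite) vpair \<Rightarrow> bool" where
  "integral_pair v \<longleftrightarrow> integral_vec (fst v) \<and> integral_vec (snd v)"

text \<open>pi^*(n) = B(-,n), with B(e_i,e_j) = a_ji - a_ij.\<close>
definition piS :: "('i::finite \<Rightarrow> 'i \<Rightarrow> nat) \<Rightarrow> real^'i \<Rightarrow> real^'i" where
  "piS a n = (\<chi> i. \<Sum>j\<in>UNIV. n $ j * (real (a j i) - real (a i j)))"

definition pprin :: "('i::finite \<Rightarrow> 'i \<Rightarrow> nat) \<Rightarrow> 'i vpair \<Rightarrow> 'i vpair" where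
  "pprin a l = (piS a (fst l) - snd l, fst l)"

definition Nplus :: "real^('i::finite) \<Rightarrow> bool" where
  "Nplus n \<longleftrightarrow> integral_vec n \<and> (\<forall>i. n $ i \<ge> 0) \<and> n \<noteq> 0"

definition primitive_vec :: "real^('i::finite) \<Rightarrow> bool" where
  "primitive_vec n \<longleftrightarrow> integral_vec n \<and>
     (\<forall>(k::int) n'. integral_vec n' \<and> n = of_int k *\<^sub>R n' \<longrightarrow> k = 1 \<or> k = -1)"

definition rat_poly_cone :: "('i::finite) vpair set \<Rightarrow> bool" where
  "rat_poly_cone C \<longleftrightarrow> (\<exists>S. finite S \<and> (\<forall>v\<in>S. integral_pair v) \<and>
      C = {(\<Sum>v\<in>S. c v *\<^sub>R v) | c. \<forall>v\<in>S. c v \<ge> 0})"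

text \<open>Abstract N^prin-graded real algebra A (the coefficient field C_reg(t) contains R):
Hom l is the homogeneous component A_l.\<close>
definition graded_alg :: "(('i::finite) vpair \<Rightarrow> 'v::real_algebra_1 set) \<Rightarrow> bool" where
  "graded_alg Hom \<longleftrightarrow> (\<forall>l. subspace (Hom l)) \<and> 1 \<in> Hom 0 \<and>
     (\<forall>l l' x y. x \<in> Hom l \<longrightarrow> y \<in> Hom l' \<longrightarrow> x * y \<in> Hom (l + l'))"

text \<open>An element G of prod_k g_{k n} is given by its components G k in degree (k n, 0), k >= 1.\<close>
definition in_gprod :: "(('i::finite) vpair \<Rightarrow> 'v::real_algebra_1 set) \<Rightarrow> real^'i \<Rightarrow> (nat \<Rightarrow> 'v) \<Rightarrow> bool" where
  "in_gprod Hom n G \<longleftrightarrow> (\<forall>k\<ge>1. G k \<in> Hom (real k *\<^sub>R n, 0))"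

text \<open>Elements of the completion supported on the ray l + N (n,0), by coefficient at l + c (n,0);
the adjoint (commutator) action of G, and exp(ad G).\<close>
definition ad_ray :: "(nat \<Rightarrow> 'v::real_algebra_1) \<Rightarrow> (nat \<Rightarrow> 'v) \<Rightarrow> nat \<Rightarrow> 'v" where
  "ad_ray G f c = (\<Sum>j\<in>{1..c}. G j * f (c - j) - f (c - j) * G j)"

definition exp_ray :: "(nat \<Rightarrow> 'v::real_algebra_1) \<Rightarrow> 'v \<Rightarrow> nat \<Rightarrow> 'v" where
  "exp_ray G x c = (\<Sum>k\<in>{0..c}. (1 / fact k) *\<^sub>R ((ad_ray G ^^ k) (\<lambda>c'. if c' = 0 then x else 0) c))"

definition is_wall :: "('i::finite vpair \<Rightarrow> 'v::real_algebra_1 set) \<Rightarrow> 'i vpair set \<Rightarrow> real^'i \<Rightarrow> (nat \<Rightarrow> 'v) \<Rightarrow> bool" where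
  "is_wall Hom d n g \<longleftrightarrow> Nplus n \<and> primitive_vec n \<and>
     (\<exists>x0 C. d = (\<lambda>v. x0 + v) ` C \<and> rat_poly_cone C \<and> C \<subseteq> {v. n \<bullet> fst v = 0}
        \<and> aff_dim C = int DIM('i vpair) - 1) \<and>
     in_gprod Hom n g"

definition Supp :: "'w set \<Rightarrow> ('w \<Rightarrow> ('i::finite) vpair set) \<Rightarrow> 'i vpair set" where
  "Supp W supp = (\<Union>w\<in>W. supp w)"

definition Joints :: "'w set \<Rightarrow> ('w \<Rightarrow> ('i::finite) vpair set) \<Rightarrow> 'i vpair set" where
  "Joints W supp = (\<Union>w\<in>W. rel_frontier (supp w)) \<union>
     (\<Union>w\<in>W. \<Union>w'\<in>W. if aff_dim (supp w \<inter> supp w') \<le> int DIM('i vpair) - 2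
                       then supp w \<inter> supp w' else {})"

text \<open>Scattering diagram: every wall is a wall; the only non-outgoing walls are the initial
walls with support (e_i,0)^perp and normal e_i.\<close>
definition scat_diagram :: "('i::finite \<Rightarrow> 'i \<Rightarrow> nat) \<Rightarrow> ('i vpair \<Rightarrow> 'v::real_algebra_1 set) \<Rightarrow>
    'w set \<Rightarrow> ('w \<Rightarrow> 'i vpair set) \<Rightarrow> ('w \<Rightarrow> real^'i) \<Rightarrow> ('w \<Rightarrow> nat \<Rightarrow> 'v) \<Rightarrow> bool" where
  "scat_diagram a Hom W supp nrm g \<longleftrightarrow>
     (\<forall>w\<in>W. is_wall Hom (supp w) (nrm w) (g w)) \<and>
     (\<forall>w\<in>W. (\<exists>i. nrm w = axis i 1 \<and> supp w = {v. fst v $ i = 0})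
             \<or> pprin a (nrm w, 0) \<notin> supp w)"

text \<open>Bending at a point p: a' is a homogeneous term, other than x itself, of g_p . x, where
g_p = exp(G) with G in prod_k g_{k n} for the normal n of the walls through p.\<close>
definition bend :: "('i::finite vpair \<Rightarrow> 'v::real_algebra_1 set) \<Rightarrow> 'w set \<Rightarrow> ('w \<Rightarrow> 'i vpair set) \<Rightarrow>
    ('w \<Rightarrow> real^'i) \<Rightarrow> 'i vpair \<Rightarrow> 'i vpair \<Rightarrow> 'v \<Rightarrow> 'i vpair \<Rightarrow> 'v \<Rightarrow> bool" where
  "bend Hom W supp nrm p l x l' x' \<longleftrightarrow>
     (\<exists>w\<in>W. p \<in> supp w \<and> (\<exists>G c. c \<ge> 1 \<and> in_gprod Hom (nrm w) G \<and>
        l' = l + (real c *\<^sub>R nrm w, 0) \<and> x' = exp_ray G x c \<and> x' \<noteq> 0))"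

definition broken_line :: "('i::finite \<Rightarrow> 'i \<Rightarrow> nat) \<Rightarrow> ('i vpair \<Rightarrow> 'v::real_algebra_1 set) \<Rightarrow>
    ('i vpair \<Rightarrow> 'v) \<Rightarrow> 'w set \<Rightarrow> ('w \<Rightarrow> 'i vpair set) \<Rightarrow> ('w \<Rightarrow> real^'i) \<Rightarrow>
    'i vpair \<Rightarrow> 'i vpair \<Rightarrow> (real \<Rightarrow> 'i vpair) \<Rightarrow> nat \<Rightarrow> (nat \<Rightarrow> real) \<Rightarrow>
    (nat \<Rightarrow> 'i vpair) \<Rightarrow> (nat \<Rightarrow> 'v) \<Rightarrow> bool" where
  "broken_line a Hom z W supp nrm l0 \<theta> \<gamma> L t l x \<longleftrightarrow>
     continuous_on {..0} \<gamma> \<and> (\<forall>\<tau>\<le>0. \<gamma> \<tau> \<notin> Joints W supp) \<and>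
     (\<forall>i<L. t i \<le> t (Suc i)) \<and> t L = 0 \<and>
     (\<forall>i\<le>L. l i \<noteq> 0 \<and> integral_pair (l i) \<and> x i \<in> Hom (l i)) \<and>
     l 0 = l0 \<and> \<gamma> 0 = \<theta> \<and> x 0 = z l0 \<and>
     (\<forall>i\<le>L. \<forall>\<tau>. (if i = 0 then \<tau> < t 0 else t (i - 1) < \<tau> \<and> \<tau> < t i) \<longrightarrow>
        (\<gamma> has_vector_derivative - pprin a (l i)) (at \<tau>)) \<and>
     (\<forall>i<L. \<gamma> (t i) \<in> Supp W supp \<and> bend Hom W supp nrm (\<gamma> (t i)) (l i) (x i) (l (Suc i)) (x (Suc i)))"

end

theory Submission
  imports Defs
begin

lemma piS_linear: "linear (piS a)"
proof (rule linearI)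
  fix b1 b2 :: "real^'a" and r :: real
  show "piS a (b1 + b2) = piS a b1 + piS a b2"
    by (auto simp: piS_def vec_eq_iff sum.distrib[symmetric] ring_distribs intro!: sum.cong)
  show "piS a (r *\<^sub>R b1) = r *\<^sub>R piS a b1"
    by (simp add: piS_def vec_eq_iff sum_distrib_left ring_distribs mult.assoc)
qed

lemma snd_l:
  assumes bl: "broken_line a Hom z W supp nrm (0, m) \<theta> \<gamma> L t l x"
  shows "i \<le> L \<Longrightarrow> snd (l i) = m"
proof (induction i)
  case 0 then show ?case using bl by (simp add: broken_line_def)
next
  case (Suc i)
  then have "i < L" by simp
  then have "bend Hom W supp nrm (\<gamma> (t i)) (l i) (x i) (l (Suc i)) (x (Suc i))"
    using bl by (simp add: broken_line_def)
  then show ?case using Suc by (auto simp: bend_def)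
qed

lemma interval_find:
  fixes t :: "nat \<Rightarrow> real"
  assumes "y < t L" "y \<notin> t ` {..L}"
  shows "\<exists>i\<le>L. (if i = 0 then y < t 0 else t (i - 1) < y \<and> y < t i)"
proof (cases "y < t 0")
  case True then show ?thesis by (intro exI[of _ 0]) auto
next
  case False
  define i where "i = (LEAST j. y < t j)"
  have yi: "y < t i" unfolding i_def by (rule LeastI[of _ L]) (rule assms(1))
  have iL: "i \<le> L" unfolding i_def by (rule Least_le) (rule assms(1))
  have i0: "i \<noteq> 0" using yi False by (metis)
  have "\<not> y < t (i - 1)" unfolding i_def
    by (rule not_less_Least) (use i0 in \<open>simp add: i_def\<close>)
  moreover have "y \<noteq> t (i - 1)" using assms(2) iL by auto
  ultimately show ?thesis using yi iL i0 by (intro exI[of _ i]) auto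
qed

theorem lemma5p5:
  fixes a :: "'i::finite \<Rightarrow> 'i \<Rightarrow> nat"
    and Hom :: "'i vpair \<Rightarrow> 'v::real_algebra_1 set"
    and z :: "'i vpair \<Rightarrow> 'v"
    and W :: "'w set" and supp :: "'w \<Rightarrow> 'i vpair set" and nrm :: "'w \<Rightarrow> real^'i"
    and g :: "'w \<Rightarrow> nat \<Rightarrow> 'v"
    and m :: "real^'i" and \<theta> :: "'i vpair"
    and \<gamma> :: "real \<Rightarrow> 'i vpair" and L :: nat and t :: "nat \<Rightarrow> real"
    and l :: "nat \<Rightarrow> 'i vpair" and x :: "nat \<Rightarrow> 'v"
  assumes no_loops: "\<forall>i. a i i = 0"
    and no_2cycles: "\<forall>i j. a i j = 0 \<or> a j i = 0"
    and graded: "graded_alg Hom"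
    and zhom: "\<forall>lam. z lam \<in> Hom lam \<and> z lam \<noteq> 0"
    and diagram: "scat_diagram a Hom W supp nrm g"
    and m_in: "\<exists>n. integral_vec n \<and> m = piS a n"
    and theta: "\<theta> \<notin> Supp W supp"
    and bl: "broken_line a Hom z W supp nrm (0, m) \<theta> \<gamma> L t l x"
  shows "\<forall>\<tau>\<le>0. fst (\<gamma> \<tau>) \<in> {fst \<theta> + piS a v | v. True}"
proof (intro allI impI)
  fix \<tau> :: real assume tau: "\<tau> \<le> 0"
  define V where "V = range (piS a)"
  have lin: "linear (piS a)" by (rule piS_linear)
  have subV: "subspace V" unfolding V_def
    by (rule linear_subspace_image[OF lin subspace_UNIV])
  obtain n where mn: "m = piS a n" using m_in by blast
  have derV: "fst (pprin a (l i)) \<in> V" if "i \<le> L" for i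
  proof -
    have "fst (pprin a (l i)) = piS a (fst (l i)) - piS a n"
      using snd_l[OF bl that] mn by (simp add: pprin_def)
    also have "\<dots> = piS a (fst (l i) - n)" using linear_diff[OF lin] by simp
    finally show ?thesis unfolding V_def by simp
  qed
  have cont: "continuous_on {..0} \<gamma>" and t0: "t L = 0" and g0: "\<gamma> 0 = \<theta>"
    and der: "\<And>i \<tau>. i \<le> L \<Longrightarrow> (if i = 0 then \<tau> < t 0 else t (i - 1) < \<tau> \<and> \<tau> < t i) \<Longrightarrow>
        (\<gamma> has_vector_derivative - pprin a (l i)) (at \<tau>)"
    using bl by (auto simp: broken_line_def)
  have const: "u \<bullet> fst (\<gamma> \<tau>) = u \<bullet> fst \<theta>" if uV: "\<And>v. v \<in> V \<Longrightarrow> u \<bullet> v = 0" for u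
  proof -
    let ?f = "\<lambda>s. u \<bullet> fst (\<gamma> s)"
    have bl_lin: "bounded_linear (\<lambda>p::'i vpair. u \<bullet> fst p)"
      by (intro bounded_linear_inner_right_comp bounded_linear_fst)
    show ?thesis
    proof (rule has_derivative_zero_unique_strong_convex[of "{..0}" "t ` {..L}" ?f 0])
      show "continuous_on {..0} ?f"
        by (intro continuous_intros continuous_on_compose2[OF _ cont]) auto
      show "?f 0 = u \<bullet> fst \<theta>" using g0 by simp
      fix y assume y: "y \<in> {..0} - t ` {..L}"
      then have "y < t L" using t0 by (cases "y = 0") auto
      then obtain i where iL: "i \<le> L" and ii: "(if i = 0 then y < t 0 else t (i - 1) < y \<and> y < t i)"
        using interval_find y by blast
      have d: "(\<gamma> has_derivative (\<lambda>h. h *\<^sub>R (- pprin a (l i)))) (at y)"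
        using der[OF iL ii] by (simp add: has_vector_derivative_def)
      have "(?f has_derivative (\<lambda>h. u \<bullet> fst (h *\<^sub>R (- pprin a (l i))))) (at y)"
        using bounded_linear.has_derivative[OF bl_lin d] by simp
      moreover have "(\<lambda>h. u \<bullet> fst (h *\<^sub>R (- pprin a (l i)))) = (\<lambda>h. 0)"
        using uV[OF derV[OF iL]] by (simp add: inner_minus_right)
      ultimately show "(?f has_derivative (\<lambda>h. 0)) (at y within {..0})"
        by (simp add: has_derivative_at_withinI)
    qed (use tau in auto)
  qed
  show "fst (\<gamma> \<tau>) \<in> {fst \<theta> + piS a v | v. True}"
  proof (rule ccontr)
    assume nin: "fst (\<gamma> \<tau>) \<notin> {fst \<theta> + piS a v | v. True}"
    define d where "d = fst (\<gamma> \<tau>) - fst \<theta>"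
    have dV: "d \<notin> V" using nin unfolding d_def V_def
      by (metis (mono_tags, lifting) add_diff_cancel_left' diff_add_cancel imageE mem_Collect_eq)
    have spV: "span V = V" using subV by (simp add: span_eq_iff)
    have "span V \<subset> span (insert d V)"
      using dV spV by (metis psubsetI span_base span_mono subset_insertI insertI1)
    then obtain u where u0: "u \<noteq> 0" and uT: "u \<in> span (insert d V)"
      and uo: "\<And>y. y \<in> span V \<Longrightarrow> orthogonal u y"
      using orthogonal_to_subspace_exists_gen[of V "insert d V"] by metis
    have uV: "\<And>v. v \<in> V \<Longrightarrow> u \<bullet> v = 0" using uo spV by (auto simp: orthogonal_def)
    obtain k where k: "u - k *\<^sub>R d \<in> span V" using uT span_breakdown_eq by blast
    have "u \<bullet> (u - k *\<^sub>R d) = 0" using uV k spV by simp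
    then have "u \<bullet> u = k * (u \<bullet> d)" by (simp add: inner_diff_right algebra_simps)
    moreover have "u \<bullet> d = 0" using const[OF uV] unfolding d_def by (simp add: inner_diff_right)
    ultimately show False using u0 by simp
  qed
qed

end
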